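(* Let $\theta\in[0,1]$ and let $Y$ be a real random variable with Gaussian-mixture CDF $F_Y(x)=\sum_{l=1}^{N_l}a_l\Phi\big(\frac{x-\mu_l}{\sigma_l}\big)$, where $a_l\ge0$, $\sum_l a_l=1$, $\sigma_l>0$, and let $\mu=\sum_l a_l\mu_l$ and $\sigma^2$ be the mean and variance of $Y$. Let $X\sim\mathrm{Bernoulli}(\theta)$ be independent of $Y$, set $\varepsilon=XY$ and $\sigma_\varepsilon^2=\theta\sigma^2+(1-\theta)\theta\mu^2$, and for an integer $M\ge1$ let $\bar\varepsilon\sim\mathcal N(\theta\mu,\sigma_\varepsilon^2/M)$. Then $$R(\varepsilon,\bar\varepsilon)\le(1-\theta)\mathbb E[|Y|]+\sum_{l=1}^{N_l}a_l\Big(|\theta\mu-\mu_l|+\Big|\frac{\sigma_\varepsilon}{\sqrt M}-\sigma_l\Big|\Big),$$ where $\mathbb E[|Y|]\le\sum_{l=1}^{N_l}\Big\{\sqrt{\tfrac{2}{\pi}}\,\sigma_l\exp\big(\tfrac{-\mu_l^2}{2\sigma_l^2}\big)+\mu_l\big[1-2\Phi\big(\tfrac{-\mu_l}{\sigma_l}\big)\big]\Big\}$.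
   Context: $\Phi$ is the CDF of the standard normal distribution and $\mathcal N(m,s^2)$ the normal distribution with mean $m$ and variance $s^2$. For real random variables $\xi,\eta$ with CDFs $F,G$, $R(\xi,\eta)=\int_{-\infty}^{\infty}|F(x)-G(x)|\,dx$ is the (1-)Wasserstein distance between their distributions. (In the paper, $\varepsilon$ models a misbehaving node's error and $\bar\varepsilon$ the central-limit Gaussian model of the average of $M$ detected errors used for compensation.) *)

theory Defs
  imports "HOL-Probability.Probability"
begin

definition Phi :: "real \<Rightarrow> real" where
  "Phi x = cdf (density lborel std_normal_density) x"

definition normal_cdf :: "real \<Rightarrow> real \<Rightarrow> real \<Rightarrow> real" where
  "normal_cdf m s x = (if s = 0 then (if m \<le> x then 1 else 0) else Phi ((x - m) / s))"

text \<open>1-Wasserstein distance between distributions given by CDFs F and G: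
  integral of |F - G| over the real line (possibly infinite).\<close>
definition wass1 :: "(real \<Rightarrow> real) \<Rightarrow> (real \<Rightarrow> real) \<Rightarrow> ennreal" where
  "wass1 F G = (\<integral>\<^sup>+ x. ennreal \<bar>F x - G x\<bar> \<partial>lborel)"

end

theory Submission
  imports Defs
begin


lemma Ico_len: "(\<integral>\<^sup>+x. indicator {a..<b} x \<partial>lborel) = ennreal (b - a)" for a b :: real
proof (cases "a \<le> b")
  case True then show ?thesis by simp
next
  case False then show ?thesis by (simp add: ennreal_neg)
qed

lemma cake:
  assumes P: "prob_space P" and U: "U \<in> borel_measurable P" and V: "V \<in> borel_measurable P"
  shows "(\<integral>\<^sup>+x. emeasure P {\<omega>\<in>space P. U \<omega> \<le> x \<and> x < V \<omega>} + emeasure P {\<omega>\<in>space P. V \<omega> \<le> x \<and> x < U \<omega>} \<partial>lborel)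
     = (\<integral>\<^sup>+\<omega>. ennreal \<bar>U \<omega> - V \<omega>\<bar> \<partial>P)"
proof -
  interpret prob_space P by fact
  interpret pair_sigma_finite lborel P by unfold_locales
  have [measurable]: "U \<in> borel_measurable P" "V \<in> borel_measurable P" using U V by auto
  have e: "emeasure P {\<omega>\<in>space P. A \<omega> \<le> x \<and> x < B \<omega>} = (\<integral>\<^sup>+\<omega>. indicator {A \<omega>..<B \<omega>} x \<partial>P)"
    if [measurable]: "A \<in> borel_measurable P" "B \<in> borel_measurable P" for A B :: "_ \<Rightarrow> real" and x :: real
  proof -
    have "emeasure P {\<omega>\<in>space P. A \<omega> \<le> x \<and> x < B \<omega>} = (\<integral>\<^sup>+\<omega>. indicator {\<omega>\<in>space P. A \<omega> \<le> x \<and> x < B \<omega>} \<omega> \<partial>P)"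
      by (rule nn_integral_indicator[symmetric]) measurable
    also have "\<dots> = (\<integral>\<^sup>+\<omega>. indicator {A \<omega>..<B \<omega>} x \<partial>P)"
      by (intro nn_integral_cong) (auto split: split_indicator)
    finally show ?thesis .
  qed
  have "(\<integral>\<^sup>+x. emeasure P {\<omega>\<in>space P. U \<omega> \<le> x \<and> x < V \<omega>} + emeasure P {\<omega>\<in>space P. V \<omega> \<le> x \<and> x < U \<omega>} \<partial>lborel)
     = (\<integral>\<^sup>+x. (\<integral>\<^sup>+\<omega>. indicator {U \<omega>..<V \<omega>} x + indicator {V \<omega>..<U \<omega>} x \<partial>P) \<partial>lborel)"
  proof (intro nn_integral_cong)
    fix x :: real
    have m: "(\<lambda>\<omega>. indicator {A \<omega>..<B \<omega>} x :: ennreal) \<in> borel_measurable P"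
      if [measurable]: "A \<in> borel_measurable P" "B \<in> borel_measurable P" for A B :: "_ \<Rightarrow> real"
      unfolding indicator_def atLeastLessThan_iff by measurable
    show "emeasure P {\<omega>\<in>space P. U \<omega> \<le> x \<and> x < V \<omega>} + emeasure P {\<omega>\<in>space P. V \<omega> \<le> x \<and> x < U \<omega>}
      = (\<integral>\<^sup>+\<omega>. indicator {U \<omega>..<V \<omega>} x + indicator {V \<omega>..<U \<omega>} x \<partial>P)"
      by (simp add: e nn_integral_add m U V)
  qed
  also have "\<dots> = (\<integral>\<^sup>+\<omega>. (\<integral>\<^sup>+x. indicator {U \<omega>..<V \<omega>} x + indicator {V \<omega>..<U \<omega>} x \<partial>lborel) \<partial>P)"
  proof (rule Fubini'[symmetric])
    show "(\<lambda>(x, \<omega>). indicator {U \<omega>..<V \<omega>} x + indicator {V \<omega>..<U \<omega>} x :: ennreal) \<in> borel_measurable (lborel \<Otimes>\<^sub>M P)"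
      unfolding indicator_def atLeastLessThan_iff by measurable
  qed
  also have "\<dots> = (\<integral>\<^sup>+\<omega>. ennreal \<bar>U \<omega> - V \<omega>\<bar> \<partial>P)"
  proof (intro nn_integral_cong)
    fix \<omega>
    show "(\<integral>\<^sup>+x. indicator {U \<omega>..<V \<omega>} x + indicator {V \<omega>..<U \<omega>} x \<partial>lborel) = ennreal \<bar>U \<omega> - V \<omega>\<bar>"
      by (simp add: nn_integral_add Ico_len ennreal_neg abs_real_def)
  qed
  finally show ?thesis .
qed

lemma cdf_distr_eq:
  assumes "prob_space P" "U \<in> borel_measurable P"
  shows "cdf (distr P borel U) x = measure P {\<omega>\<in>space P. U \<omega> \<le> x}"
proof -
  have "cdf (distr P borel U) x = measure P (U -` {..x} \<inter> space P)"
    unfolding cdf_def2 using assms by (subst measure_distr) auto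
  also have "U -` {..x} \<inter> space P = {\<omega>\<in>space P. U \<omega> \<le> x}" by auto
  finally show ?thesis .
qed

lemma W_le:
  assumes P: "prob_space P" and U[measurable]: "U \<in> borel_measurable P" and V[measurable]: "V \<in> borel_measurable P"
  shows "(\<integral>\<^sup>+x. ennreal \<bar>cdf (distr P borel U) x - cdf (distr P borel V) x\<bar> \<partial>lborel) \<le> (\<integral>\<^sup>+\<omega>. ennreal \<bar>U \<omega> - V \<omega>\<bar> \<partial>P)"
proof -
  interpret prob_space P by fact
  have "(\<integral>\<^sup>+x. ennreal \<bar>cdf (distr P borel U) x - cdf (distr P borel V) x\<bar> \<partial>lborel)
    \<le> (\<integral>\<^sup>+x. emeasure P {\<omega>\<in>space P. U \<omega> \<le> x \<and> x < V \<omega>} + emeasure P {\<omega>\<in>space P. V \<omega> \<le> x \<and> x < U \<omega>} \<partial>lborel)"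
  proof (intro nn_integral_mono)
    fix x :: real
    define A where "A = {\<omega>\<in>space P. U \<omega> \<le> x}"
    define B where "B = {\<omega>\<in>space P. V \<omega> \<le> x}"
    have [measurable]: "A \<in> sets P" "B \<in> sets P" unfolding A_def B_def by measurable
    have 1: "measure P (A - A \<inter> B) = measure P A - measure P (A \<inter> B)"
      by (rule finite_measure_Diff) auto
    have 2: "measure P (B - A \<inter> B) = measure P B - measure P (A \<inter> B)"
      by (rule finite_measure_Diff) auto
    have e1: "A - A \<inter> B = {\<omega>\<in>space P. U \<omega> \<le> x \<and> x < V \<omega>}" unfolding A_def B_def by auto
    have e2: "B - A \<inter> B = {\<omega>\<in>space P. V \<omega> \<le> x \<and> x < U \<omega>}" unfolding A_def B_def by auto
    have "\<bar>measure P A - measure P B\<bar> \<le> measure P (A - A \<inter> B) + measure P (B - A \<inter> B)"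
      unfolding 1 2 using measure_nonneg[of P "A - A \<inter> B"] measure_nonneg[of P "B - A \<inter> B"] 1 2 by linarith
    then show "ennreal \<bar>cdf (distr P borel U) x - cdf (distr P borel V) x\<bar>
       \<le> emeasure P {\<omega>\<in>space P. U \<omega> \<le> x \<and> x < V \<omega>} + emeasure P {\<omega>\<in>space P. V \<omega> \<le> x \<and> x < U \<omega>}"
      using cdf_distr_eq[OF P U, of x] cdf_distr_eq[OF P V, of x]
      unfolding e1 e2 A_def[symmetric] B_def[symmetric]
      by (simp add: emeasure_eq_measure ennreal_plus[symmetric] del: ennreal_plus)
  qed
  also have "\<dots> = (\<integral>\<^sup>+\<omega>. ennreal \<bar>U \<omega> - V \<omega>\<bar> \<partial>P)"
    by (rule cake[OF P U V])
  finally show ?thesis .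
qed

lemma W_eq0:
  assumes P: "prob_space P" and U[measurable]: "U \<in> borel_measurable P"
  shows "(\<integral>\<^sup>+x. ennreal \<bar>indicator {0..} x - cdf (distr P borel U) x\<bar> \<partial>lborel) = (\<integral>\<^sup>+\<omega>. ennreal \<bar>U \<omega>\<bar> \<partial>P)"
proof -
  interpret prob_space P by fact
  have "(\<integral>\<^sup>+x. ennreal \<bar>indicator {0..} x - cdf (distr P borel U) x\<bar> \<partial>lborel)
    = (\<integral>\<^sup>+x. emeasure P {\<omega>\<in>space P. U \<omega> \<le> x \<and> x < 0} + emeasure P {\<omega>\<in>space P. 0 \<le> x \<and> x < U \<omega>} \<partial>lborel)"
  proof (intro nn_integral_cong)
    fix x :: real
    show "ennreal \<bar>indicator {0..} x - cdf (distr P borel U) x\<bar> =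
      emeasure P {\<omega>\<in>space P. U \<omega> \<le> x \<and> x < 0} + emeasure P {\<omega>\<in>space P. 0 \<le> x \<and> x < U \<omega>}"
    proof (cases "0 \<le> x")
      case True
      have "{\<omega>\<in>space P. 0 \<le> x \<and> x < U \<omega>} = space P - {\<omega>\<in>space P. U \<omega> \<le> x}" using True by auto
      then have "measure P {\<omega>\<in>space P. 0 \<le> x \<and> x < U \<omega>} = 1 - measure P {\<omega>\<in>space P. U \<omega> \<le> x}"
        by (simp add: prob_compl)
      moreover have "{\<omega>\<in>space P. U \<omega> \<le> x \<and> x < 0} = {}" using True by auto
      ultimately show ?thesis using True cdf_distr_eq[OF P U, of x]
        by (simp add: emeasure_eq_measure)
    next
      case False
      have "{\<omega>\<in>space P. U \<omega> \<le> x \<and> x < 0} = {\<omega>\<in>space P. U \<omega> \<le> x}" using False by auto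
      moreover have "{\<omega>\<in>space P. 0 \<le> x \<and> x < U \<omega>} = {}" using False by auto
      ultimately show ?thesis using False cdf_distr_eq[OF P U, of x]
        by (simp add: emeasure_eq_measure)
    qed
  qed
  also have "\<dots> = (\<integral>\<^sup>+\<omega>. ennreal \<bar>U \<omega> - 0\<bar> \<partial>P)"
    by (rule cake[OF P U]) simp
  finally show ?thesis by simp
qed




lemma G_deriv: "DERIV (\<lambda>x. - std_normal_density x) x :> x * std_normal_density x"
  unfolding std_normal_density_def
  by (auto intro!: derivative_eq_intros simp: field_simps)

lemma G_lim: "((\<lambda>x. - std_normal_density x) \<longlongrightarrow> 0) at_top"
proof -
  have "((\<lambda>x::real. - ((1 / sqrt (2 * pi)) * exp (- ((1/2) * x\<^sup>2)))) \<longlongrightarrow> - ((1 / sqrt (2 * pi)) * 0)) at_top"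
    by (intro tendsto_minus tendsto_mult tendsto_const filterlim_compose[OF exp_at_bot]
          filterlim_compose[OF filterlim_uminus_at_bot_at_top] filterlim_tendsto_pos_mult_at_top[OF tendsto_const] filterlim_pow_at_top filterlim_ident) auto
  then show ?thesis unfolding std_normal_density_def by simp
qed

lemma tail_pos:
  assumes "0 \<le> d"
  shows "has_bochner_integral lborel (\<lambda>z. indicator {d..} z * (z * std_normal_density z)) (std_normal_density d)"
proof (rule has_bochner_integral_nn_integral)
  have "(\<integral>\<^sup>+z. ennreal (indicator {d..} z * (z * std_normal_density z)) \<partial>lborel)
     = (\<integral>\<^sup>+z. ennreal (z * std_normal_density z) * indicator {d..} z \<partial>lborel)"
    by (intro nn_integral_cong) (auto split: split_indicator)
  also have "\<dots> = ennreal (0 - (- std_normal_density d))"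
  proof (rule nn_integral_FTC_atLeast)
    show "\<And>x. d \<le> x \<Longrightarrow> 0 \<le> x * std_normal_density x" using assms by auto
  qed (use G_deriv G_lim in auto)
  finally show "(\<integral>\<^sup>+z. ennreal (indicator {d..} z * (z * std_normal_density z)) \<partial>lborel) = ennreal (std_normal_density d)"
    by simp
  show "AE x in lborel. 0 \<le> indicator {d..} x * (x * std_normal_density x)"
    using assms by (auto split: split_indicator)
qed auto

lemma tail_moment:
  "has_bochner_integral lborel (\<lambda>z. indicator {c<..} z * (z * std_normal_density z)) (std_normal_density c)"
proof -
  define d where "d = \<bar>c\<bar>"
  have cd: "c \<le> d" "0 \<le> d" unfolding d_def by auto
  have sd: "std_normal_density d = std_normal_density c"
    unfolding d_def std_normal_density_def by simp
  have 1: "has_bochner_integral lborel (\<lambda>z. z * std_normal_density z * indicator {c..d} z)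
      ((- std_normal_density d) - (- std_normal_density c))"
    by (rule has_bochner_integral_FTC_Icc_real[OF cd(1) G_deriv])
       (auto simp: std_normal_density_def intro!: continuous_intros)
  have 2: "has_bochner_integral lborel (\<lambda>z. z * std_normal_density z * indicator {c..d} z
       + indicator {d..} z * (z * std_normal_density z)) (std_normal_density c)"
    using has_bochner_integral_add[OF 1 tail_pos[OF cd(2)]] sd by simp
  show ?thesis
  proof (subst has_bochner_integral_cong_AE)
    show "AE x in lborel. indicator {c<..} x * (x * std_normal_density x) = x * std_normal_density x * indicator {c..d} x
       + indicator {d..} x * (x * std_normal_density x)"
      using AE_lborel_singleton[of d] AE_lborel_singleton[of c] by eventually_elim (use cd in \<open>auto split: split_indicator\<close>)
  qed (use 2 in auto)
qed

lemma Phi_has: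
  "has_bochner_integral lborel (\<lambda>z. indicator {..c} z * std_normal_density z) (Phi c)"
proof -
  have int: "integrable lborel (\<lambda>z. indicator {..c} z * std_normal_density z)"
    using integrable_mult_indicator[of "{..c}" lborel std_normal_density]
      integrable_std_normal_moment[of 0] by simp
  have "Phi c = enn2real (\<integral>\<^sup>+ x. ennreal (std_normal_density x) * indicator {..c} x \<partial>lborel)"
    unfolding Phi_def cdf_def2 measure_def by (subst emeasure_density) auto
  also have "\<dots> = (\<integral>z. indicator {..c} z * std_normal_density z \<partial>lborel)"
    by (rule enn2real_nn_integral_eq_integral) (auto split: split_indicator)
  finally show ?thesis using has_bochner_integral_integrable[OF int] by simp
qed

lemma head_moment:
  "has_bochner_integral lborel (\<lambda>z. indicator {..c} z * (z * std_normal_density z)) (- std_normal_density c)"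
proof -
  have "has_bochner_integral lborel (\<lambda>z. std_normal_density z * z ^ (2 * 0 + 1) - indicator {c<..} z * (z * std_normal_density z)) (0 - std_normal_density c)"
    by (rule has_bochner_integral_diff[OF std_normal_moment_odd tail_moment])
  moreover have "(\<lambda>z. std_normal_density z * z ^ (2 * 0 + 1) - indicator {c<..} z * (z * std_normal_density z))
     = (\<lambda>z. indicator {..c} z * (z * std_normal_density z))"
    by (auto simp: fun_eq_iff split: split_indicator)
  ultimately show ?thesis by simp
qed

lemma fold_has:
  assumes s: "0 < s"
  shows "has_bochner_integral lborel (\<lambda>z. std_normal_density z * \<bar>m + s * z\<bar>)
      (sqrt (2 / pi) * s * exp (- m\<^sup>2 / (2 * s\<^sup>2)) + m * (1 - 2 * Phi (- m / s)))"
proof -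
  define c where "c = - m / s"
  have h1: "has_bochner_integral lborel (\<lambda>z. std_normal_density z * z ^ (2 * 0)) 1"
    using std_normal_moment_even[of 0] by simp
  have h2: "has_bochner_integral lborel (\<lambda>z. std_normal_density z * z ^ (2 * 0 + 1)) 0"
    by (rule std_normal_moment_odd)
  have H: "has_bochner_integral lborel
     (\<lambda>z. m * (std_normal_density z * z ^ (2 * 0)) + s * (std_normal_density z * z ^ (2 * 0 + 1))
        - ((2 * m) * (indicator {..c} z * std_normal_density z) + (2 * s) * (indicator {..c} z * (z * std_normal_density z))))
     (m * 1 + s * 0 - ((2 * m) * Phi c + (2 * s) * (- std_normal_density c)))"
    by (intro has_bochner_integral_diff has_bochner_integral_add has_bochner_integral_mult_right h1 h2 Phi_has head_moment)
  have eqf: "(\<lambda>z. m * (std_normal_density z * z ^ (2 * 0)) + s * (std_normal_density z * z ^ (2 * 0 + 1))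
        - ((2 * m) * (indicator {..c} z * std_normal_density z) + (2 * s) * (indicator {..c} z * (z * std_normal_density z))))
      = (\<lambda>z. std_normal_density z * \<bar>m + s * z\<bar>)"
  proof
    fix z
    have "z \<le> c \<longleftrightarrow> m + s * z \<le> 0" unfolding c_def using s by (simp add: field_simps) linarith
    then have "\<bar>m + s * z\<bar> = (if z \<le> c then - (m + s * z) else m + s * z)" by auto
    then show "m * (std_normal_density z * z ^ (2 * 0)) + s * (std_normal_density z * z ^ (2 * 0 + 1))
        - ((2 * m) * (indicator {..c} z * std_normal_density z) + (2 * s) * (indicator {..c} z * (z * std_normal_density z)))
      = std_normal_density z * \<bar>m + s * z\<bar>"
      by (cases "z \<le> c") (simp_all add: indicator_def algebra_simps)
  qed
  have val: "m * 1 + s * 0 - ((2 * m) * Phi c + (2 * s) * (- std_normal_density c))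
     = sqrt (2 / pi) * s * exp (- m\<^sup>2 / (2 * s\<^sup>2)) + m * (1 - 2 * Phi (- m / s))"
  proof -
    have r: "2 / sqrt (2 * pi) = sqrt (2 / pi)"
      by (simp add: real_sqrt_divide real_sqrt_mult field_simps)
    have q: "- c\<^sup>2 / 2 = - m\<^sup>2 / (2 * s\<^sup>2)" unfolding c_def using s by (simp add: field_simps power2_eq_square)
    have e1: "2 * std_normal_density c = sqrt (2 / pi) * exp (- m\<^sup>2 / (2 * s\<^sup>2))"
      unfolding std_normal_density_def q[symmetric] r[symmetric] by simp
    have "m * 1 + s * 0 - ((2 * m) * Phi c + (2 * s) * (- std_normal_density c))
        = s * (2 * std_normal_density c) + m * (1 - 2 * Phi c)" by (simp add: algebra_simps)
    also have "\<dots> = sqrt (2 / pi) * s * exp (- m\<^sup>2 / (2 * s\<^sup>2)) + m * (1 - 2 * Phi (- m / s))"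
      unfolding e1 by (simp add: c_def algebra_simps)
    finally show ?thesis .
  qed
  have Hb: "has_bochner_integral lborel (\<lambda>z. std_normal_density z * \<bar>m + s * z\<bar>)
      (sqrt (2 / pi) * s * exp (- m\<^sup>2 / (2 * s\<^sup>2)) + m * (1 - 2 * Phi (- m / s)))"
    using H unfolding eqf val .
  then show ?thesis .
qed

lemma fold_nonneg:
  assumes s: "0 < s"
  shows "0 \<le> sqrt (2 / pi) * s * exp (- m\<^sup>2 / (2 * s\<^sup>2)) + m * (1 - 2 * Phi (- m / s))"
proof -
  have e: "integral\<^sup>L lborel (\<lambda>z. std_normal_density z * \<bar>m + s * z\<bar>)
      = sqrt (2 / pi) * s * exp (- m\<^sup>2 / (2 * s\<^sup>2)) + m * (1 - 2 * Phi (- m / s))"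
    by (rule has_bochner_integral_integral_eq[OF fold_has[OF s]])
  have "0 \<le> integral\<^sup>L lborel (\<lambda>z. std_normal_density z * \<bar>m + s * z\<bar>)"
    by (rule integral_nonneg_AE) simp
  then show ?thesis unfolding e .
qed

lemma fold_mean:
  assumes s: "0 < s"
  shows "(\<integral>\<^sup>+z. ennreal \<bar>m + s * z\<bar> \<partial>(density lborel std_normal_density))
     = ennreal (sqrt (2 / pi) * s * exp (- m\<^sup>2 / (2 * s\<^sup>2)) + m * (1 - 2 * Phi (- m / s)))"
proof -
  note Hb = fold_has[OF s, of m]
  have int: "integrable lborel (\<lambda>z. std_normal_density z * \<bar>m + s * z\<bar>)"
    using Hb by (rule integrable.intros)
  have e: "integral\<^sup>L lborel (\<lambda>z. std_normal_density z * \<bar>m + s * z\<bar>)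
      = sqrt (2 / pi) * s * exp (- m\<^sup>2 / (2 * s\<^sup>2)) + m * (1 - 2 * Phi (- m / s))"
    by (rule has_bochner_integral_integral_eq[OF Hb])
  have "(\<integral>\<^sup>+z. ennreal \<bar>m + s * z\<bar> \<partial>(density lborel std_normal_density))
     = (\<integral>\<^sup>+z. ennreal (std_normal_density z) * ennreal \<bar>m + s * z\<bar> \<partial>lborel)"
    by (rule nn_integral_density) simp_all
  also have "\<dots> = (\<integral>\<^sup>+z. ennreal (std_normal_density z * \<bar>m + s * z\<bar>) \<partial>lborel)"
    by (intro nn_integral_cong) (simp add: ennreal_mult)
  also have "\<dots> = ennreal (integral\<^sup>L lborel (\<lambda>z. std_normal_density z * \<bar>m + s * z\<bar>))"
    by (rule nn_integral_eq_integral[OF int]) simp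
  finally show ?thesis unfolding e .
qed




abbreviation N01 :: "real measure" where "N01 \<equiv> density lborel std_normal_density"

lemma N01_prob: "prob_space N01"
  by (rule prob_space_normal_density) simp

lemma space_N01[simp]: "space N01 = UNIV" by simp

lemma Phi_eq: "Phi x = measure N01 {..x}"
  unfolding Phi_def cdf_def2 ..

lemma Phi_bounds: "0 \<le> Phi x" "Phi x \<le> 1"
  unfolding Phi_eq using prob_space.prob_le_1[OF N01_prob] by auto

lemma Phi_mono: "mono Phi"
proof
  fix x y :: real assume "x \<le> y"
  then show "Phi x \<le> Phi y" unfolding Phi_eq
    by (intro finite_measure.finite_measure_mono prob_space.finite_measure[OF N01_prob]) auto
qed

lemma Phi_aff_meas[measurable]: "(\<lambda>x. Phi ((x - m) / s)) \<in> borel_measurable borel"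
  using measurable_compose[OF _ borel_measurable_mono[OF Phi_mono], of "\<lambda>x. (x - m) / s" borel]
  by simp

lemma cdf_affine:
  assumes "0 < s"
  shows "cdf (distr N01 borel (\<lambda>z. m + s * z)) x = Phi ((x - m) / s)"
proof -
  have "cdf (distr N01 borel (\<lambda>z. m + s * z)) x = measure N01 {z\<in>space N01. m + s * z \<le> x}"
    by (rule cdf_distr_eq[OF N01_prob]) simp
  also have "{z\<in>space N01. m + s * z \<le> x} = {..(x - m) / s}"
    using assms by (auto simp: field_simps)
  finally show ?thesis unfolding Phi_eq .
qed

lemma cdf_normal_cdf:
  assumes "0 \<le> s"
  shows "cdf (distr N01 borel (\<lambda>z. m + s * z)) x = normal_cdf m s x"
proof (cases "s = 0")
  case True
  have "cdf (distr N01 borel (\<lambda>z. m + s * z)) x = measure N01 {z\<in>space N01. m + s * z \<le> x}"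
    by (rule cdf_distr_eq[OF N01_prob]) simp
  also have "\<dots> = (if m \<le> x then 1 else 0)"
    using True prob_space.prob_space[OF N01_prob] by auto
  finally show ?thesis unfolding normal_cdf_def using True by simp
next
  case False
  then show ?thesis using assms cdf_affine[of s m x] by (simp add: normal_cdf_def)
qed

lemma W_normals:
  assumes "0 < \<sigma>" "0 \<le> s"
  shows "(\<integral>\<^sup>+x. ennreal \<bar>Phi ((x - \<mu>) / \<sigma>) - normal_cdf m s x\<bar> \<partial>lborel) \<le> ennreal (\<bar>m - \<mu>\<bar> + \<bar>s - \<sigma>\<bar>)"
proof -
  interpret N: prob_space N01 by (rule N01_prob)
  have "(\<integral>\<^sup>+x. ennreal \<bar>Phi ((x - \<mu>) / \<sigma>) - normal_cdf m s x\<bar> \<partial>lborel)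
     = (\<integral>\<^sup>+x. ennreal \<bar>cdf (distr N01 borel (\<lambda>z. \<mu> + \<sigma> * z)) x - cdf (distr N01 borel (\<lambda>z. m + s * z)) x\<bar> \<partial>lborel)"
    using cdf_affine[OF assms(1)] cdf_normal_cdf[OF assms(2)] by simp
  also have "\<dots> \<le> (\<integral>\<^sup>+z. ennreal \<bar>(\<mu> + \<sigma> * z) - (m + s * z)\<bar> \<partial>N01)"
    by (rule W_le[OF N01_prob]) auto
  also have "\<dots> \<le> (\<integral>\<^sup>+z. ennreal \<bar>m - \<mu>\<bar> + ennreal \<bar>s - \<sigma>\<bar> * ennreal \<bar>0 + 1 * z\<bar> \<partial>N01)"
  proof (intro nn_integral_mono)
    fix z :: real
    have "\<bar>(\<mu> + \<sigma> * z) - (m + s * z)\<bar> \<le> \<bar>m - \<mu>\<bar> + \<bar>s - \<sigma>\<bar> * \<bar>z\<bar>"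
    proof -
      have "(\<mu> + \<sigma> * z) - (m + s * z) = - ((m - \<mu>) + (s - \<sigma>) * z)" by (simp add: algebra_simps)
      then have "\<bar>(\<mu> + \<sigma> * z) - (m + s * z)\<bar> = \<bar>(m - \<mu>) + (s - \<sigma>) * z\<bar>" by simp
      also have "\<dots> \<le> \<bar>m - \<mu>\<bar> + \<bar>(s - \<sigma>) * z\<bar>" by (rule abs_triangle_ineq)
      finally show ?thesis by (simp add: abs_mult)
    qed
    then show "ennreal \<bar>(\<mu> + \<sigma> * z) - (m + s * z)\<bar> \<le> ennreal \<bar>m - \<mu>\<bar> + ennreal \<bar>s - \<sigma>\<bar> * ennreal \<bar>0 + 1 * z\<bar>"
      by (simp add: ennreal_mult[symmetric] ennreal_plus[symmetric] del: ennreal_plus)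
  qed
  also have "\<dots> = ennreal \<bar>m - \<mu>\<bar> + ennreal \<bar>s - \<sigma>\<bar> * (\<integral>\<^sup>+z. ennreal \<bar>0 + 1 * z\<bar> \<partial>N01)"
  proof -
    have sp: "emeasure N01 UNIV = 1" using N.emeasure_space_1 by simp
    show ?thesis by (simp add: nn_integral_add nn_integral_cmult sp)
  qed
  also have "\<dots> = ennreal \<bar>m - \<mu>\<bar> + ennreal \<bar>s - \<sigma>\<bar> * ennreal (sqrt (2 / pi))"
    using fold_mean[of 1 0] by simp
  also have "\<dots> \<le> ennreal \<bar>m - \<mu>\<bar> + ennreal \<bar>s - \<sigma>\<bar> * ennreal 1"
  proof -
    have "sqrt (2 / pi) \<le> 1" using pi_gt3 by (simp add: real_sqrt_le_1_iff)
    then show ?thesis by (rule add_left_mono[OF mult_left_mono[OF ennreal_leI]]) simp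
  qed
  also have "\<dots> = ennreal (\<bar>m - \<mu>\<bar> + \<bar>s - \<sigma>\<bar>)"
    using ennreal_plus[of "\<bar>m - \<mu>\<bar>" "\<bar>s - \<sigma>\<bar>"] by simp
  finally show ?thesis .
qed




lemma cdf_distr_meas[measurable]:
  assumes "prob_space P" "U \<in> borel_measurable P"
  shows "cdf (distr P borel U) \<in> borel_measurable borel"
proof (rule borel_measurable_mono, rule monoI)
  interpret prob_space "distr P borel U" using assms by (intro prob_space.prob_space_distr) auto
  fix x y :: real assume "x \<le> y"
  then show "cdf (distr P borel U) x \<le> cdf (distr P borel U) y"
    unfolding cdf_def2 by (intro finite_measure_mono) auto
qed

lemma H_eq:
  fixes X Y :: "'s \<Rightarrow> real"
  assumes P: "prob_space M"
    and Y[measurable]: "Y \<in> borel_measurable M"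
    and X[measurable]: "X \<in> borel_measurable M"
    and p1: "prob_space.prob M {\<omega> \<in> space M. X \<omega> = 1} = \<theta>"
    and p0: "prob_space.prob M {\<omega> \<in> space M. X \<omega> = 0} = 1 - \<theta>"
    and ind: "prob_space.indep_var M borel X borel Y"
  shows "cdf (distr M borel (\<lambda>\<omega>. X \<omega> * Y \<omega>)) x = \<theta> * cdf (distr M borel Y) x + (1 - \<theta>) * indicator {0..} x"
proof -
  interpret prob_space M by fact
  define A1 where "A1 = {\<omega> \<in> space M. X \<omega> = 1}"
  define A0 where "A0 = {\<omega> \<in> space M. X \<omega> = 0}"
  have [measurable]: "A1 \<in> sets M" "A0 \<in> sets M" unfolding A1_def A0_def by measurable
  have "prob (A1 \<union> A0) = prob A1 + prob A0"
    by (rule finite_measure_Union) (auto simp: A1_def A0_def)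
  then have "prob (A1 \<union> A0) = 1" using p1 p0 unfolding A1_def A0_def by simp
  then have "prob (space M - (A1 \<union> A0)) = 0" by (simp add: prob_compl)
  then have "space M - (A1 \<union> A0) \<in> null_sets M"
    by (simp add: null_sets_def emeasure_eq_measure)
  then have AE01: "AE \<omega> in M. X \<omega> = 1 \<or> X \<omega> = 0"
    by (rule AE_I') (auto simp: A1_def A0_def)
  have "cdf (distr M borel (\<lambda>\<omega>. X \<omega> * Y \<omega>)) x = prob {\<omega>\<in>space M. X \<omega> * Y \<omega> \<le> x}"
    by (rule cdf_distr_eq[OF P]) simp
  also have "\<dots> = prob ({\<omega>\<in>space M. X \<omega> = 1 \<and> Y \<omega> \<le> x} \<union> {\<omega>\<in>space M. X \<omega> = 0 \<and> 0 \<le> x})"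
    by (rule measure_eq_AE) (use AE01 in \<open>auto\<close>)
  also have "\<dots> = prob {\<omega>\<in>space M. X \<omega> = 1 \<and> Y \<omega> \<le> x} + prob {\<omega>\<in>space M. X \<omega> = 0 \<and> 0 \<le> x}"
    by (rule finite_measure_Union) auto
  also have "prob {\<omega>\<in>space M. X \<omega> = 1 \<and> Y \<omega> \<le> x} = prob A1 * prob {\<omega>\<in>space M. Y \<omega> \<le> x}"
  proof -
    have "prob ((\<lambda>\<omega>. (X \<omega>, Y \<omega>)) -` ({1} \<times> {..x}) \<inter> space M) = prob (X -` {1} \<inter> space M) * prob (Y -` {..x} \<inter> space M)"
      by (rule indep_varD[OF ind]) auto
    moreover have "(\<lambda>\<omega>. (X \<omega>, Y \<omega>)) -` ({1} \<times> {..x}) \<inter> space M = {\<omega>\<in>space M. X \<omega> = 1 \<and> Y \<omega> \<le> x}" by auto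
    moreover have "X -` {1} \<inter> space M = A1" unfolding A1_def by auto
    moreover have "Y -` {..x} \<inter> space M = {\<omega>\<in>space M. Y \<omega> \<le> x}" by auto
    ultimately show ?thesis by simp
  qed
  also have "prob {\<omega>\<in>space M. Y \<omega> \<le> x} = cdf (distr M borel Y) x"
    by (rule cdf_distr_eq[OF P Y, symmetric])
  also have "prob {\<omega>\<in>space M. X \<omega> = 0 \<and> 0 \<le> x} = (1 - \<theta>) * indicator {0..} x"
    using p0 by (cases "0 \<le> x") auto
  finally show ?thesis using p1 unfolding A1_def by simp
qed




lemma mixture_abs:
  fixes a P :: "nat \<Rightarrow> real"
  assumes a0: "\<And>l. l \<in> {1..N} \<Longrightarrow> a l \<ge> 0" and a1: "(\<Sum>l=1..N. a l) = 1"
    and Pb: "\<And>l. 0 \<le> P l" "\<And>l. P l \<le> 1"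
  shows "\<bar>indicator {0..} x - (\<Sum>l=1..N. a l * P l)\<bar> = (\<Sum>l=1..N. a l * \<bar>indicator {0..} x - P l\<bar>)"
proof (cases "0 \<le> x")
  case True
  have "(\<Sum>l=1..N. a l * \<bar>indicator {0..} x - P l\<bar>) = (\<Sum>l=1..N. a l * (1 - P l))"
    using True Pb by (intro sum.cong) auto
  also have "\<dots> = 1 - (\<Sum>l=1..N. a l * P l)"
    using a1 by (simp add: algebra_simps sum_subtractf)
  finally have e: "(\<Sum>l=1..N. a l * \<bar>indicator {0..} x - P l\<bar>) = 1 - (\<Sum>l=1..N. a l * P l)" .
  have "0 \<le> (\<Sum>l=1..N. a l * \<bar>indicator {0..} x - P l\<bar>)"
    using a0 by (intro sum_nonneg) auto
  then show ?thesis using e True by simp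
next
  case False
  have "0 \<le> (\<Sum>l=1..N. a l * P l)" using a0 Pb by (intro sum_nonneg) auto
  moreover have "(\<Sum>l=1..N. a l * \<bar>indicator {0..} x - P l\<bar>) = (\<Sum>l=1..N. a l * P l)"
    using False Pb by (intro sum.cong) auto
  ultimately show ?thesis using False by simp
qed

theorem theorem3:
  fixes M :: "'s measure"
    and X Y ebar :: "'s \<Rightarrow> real"
    and \<theta> :: real and N :: nat and Mc :: nat
    and a mu sig :: "nat \<Rightarrow> real"
  assumes "prob_space M"
    and "\<theta> \<in> {0..1}"
    and "\<And>l. l \<in> {1..N} \<Longrightarrow> a l \<ge> 0"
    and "(\<Sum>l=1..N. a l) = 1"
    and "\<And>l. l \<in> {1..N} \<Longrightarrow> sig l > 0"
    and "Y \<in> borel_measurable M"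
    and "\<And>x. cdf (distr M borel Y) x = (\<Sum>l=1..N. a l * Phi ((x - mu l) / sig l))"
    and "X \<in> borel_measurable M"
    and "prob_space.prob M {\<omega> \<in> space M. X \<omega> = 1} = \<theta>"
    and "prob_space.prob M {\<omega> \<in> space M. X \<omega> = 0} = 1 - \<theta>"
    and "prob_space.indep_var M borel X borel Y"
    and "Mc \<ge> 1"
    and "ebar \<in> borel_measurable M"
  defines "\<mu> \<equiv> (\<Sum>l=1..N. a l * mu l)"
    and "\<sigma>\<epsilon> \<equiv> sqrt (\<theta> * prob_space.variance M Y + (1 - \<theta>) * \<theta> * (\<Sum>l=1..N. a l * mu l)\<^sup>2)"
  assumes "\<And>x. cdf (distr M borel ebar) x = normal_cdf (\<theta> * \<mu>) (\<sigma>\<epsilon> / sqrt (real Mc)) x"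
  shows "wass1 (cdf (distr M borel (\<lambda>\<omega>. X \<omega> * Y \<omega>))) (cdf (distr M borel ebar))
           \<le> ennreal ((1 - \<theta>) * prob_space.expectation M (\<lambda>\<omega>. \<bar>Y \<omega>\<bar>)
               + (\<Sum>l=1..N. a l * (\<bar>\<theta> * \<mu> - mu l\<bar> + \<bar>\<sigma>\<epsilon> / sqrt (real Mc) - sig l\<bar>)))
         \<and> prob_space.expectation M (\<lambda>\<omega>. \<bar>Y \<omega>\<bar>)
           \<le> (\<Sum>l=1..N. sqrt (2 / pi) * sig l * exp (- (mu l)\<^sup>2 / (2 * (sig l)\<^sup>2))
                        + mu l * (1 - 2 * Phi (- mu l / sig l)))"
proof -
  note P = assms(1)
  interpret prob_space M by fact
  note th = assms(2)
  note a0 = assms(3)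
  note a1 = assms(4)
  note sg = assms(5)
  note Ym[measurable] = assms(6)
  note Fe = assms(7)
  note Xm[measurable] = assms(8)
  note em[measurable] = assms(13)
  note Ge = assms(16)
  define F where "F = cdf (distr M borel Y)"
  define G where "G = cdf (distr M borel ebar)"
  define s where "s = \<sigma>\<epsilon> / sqrt (real Mc)"
  define fold where "fold l = sqrt (2 / pi) * sig l * exp (- (mu l)\<^sup>2 / (2 * (sig l)\<^sup>2)) + mu l * (1 - 2 * Phi (- mu l / sig l))" for l
  have Fm[measurable]: "F \<in> borel_measurable borel" unfolding F_def by (rule cdf_distr_meas[OF P Ym])
  have Gm[measurable]: "G \<in> borel_measurable borel" unfolding G_def by (rule cdf_distr_meas[OF P em])
  have s0: "0 \<le> s"
  proof -
    have "0 \<le> prob_space.variance M Y" by (simp add: integral_nonneg_AE)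
    moreover have "0 \<le> \<theta>" "0 \<le> 1 - \<theta>" using th by auto
    ultimately have "0 \<le> \<theta> * prob_space.variance M Y + (1 - \<theta>) * \<theta> * (\<Sum>l=1..N. a l * mu l)\<^sup>2"
      by (intro add_nonneg_nonneg mult_nonneg_nonneg) auto
    then show ?thesis unfolding s_def \<sigma>\<epsilon>_def by simp
  qed
  have fold0: "l \<in> {1..N} \<Longrightarrow> 0 \<le> fold l" for l unfolding fold_def using fold_nonneg[OF sg] by blast
  have EY: "(\<integral>\<^sup>+\<omega>. ennreal \<bar>Y \<omega>\<bar> \<partial>M) = ennreal (\<Sum>l=1..N. a l * fold l)"
  proof -
    have "(\<integral>\<^sup>+\<omega>. ennreal \<bar>Y \<omega>\<bar> \<partial>M) = (\<integral>\<^sup>+x. ennreal \<bar>indicator {0..} x - F x\<bar> \<partial>lborel)"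
      unfolding F_def by (rule W_eq0[OF P Ym, symmetric])
    also have "\<dots> = (\<integral>\<^sup>+x. (\<Sum>l=1..N. ennreal (a l) * ennreal \<bar>indicator {0..} x - Phi ((x - mu l) / sig l)\<bar>) \<partial>lborel)"
    proof (intro nn_integral_cong)
      fix x :: real
      have "\<bar>indicator {0..} x - F x\<bar> = (\<Sum>l=1..N. a l * \<bar>indicator {0..} x - Phi ((x - mu l) / sig l)\<bar>)"
        unfolding F_def Fe by (rule mixture_abs[OF a0 a1]) (simp_all add: Phi_bounds)
      moreover have "(\<Sum>l=1..N. ennreal (a l) * ennreal \<bar>indicator {0..} x - Phi ((x - mu l) / sig l)\<bar>)
          = (\<Sum>l=1..N. ennreal (a l * \<bar>indicator {0..} x - Phi ((x - mu l) / sig l)\<bar>))"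
        by (intro sum.cong) (auto simp: ennreal_mult a0)
      moreover have "\<dots> = ennreal (\<Sum>l=1..N. a l * \<bar>indicator {0..} x - Phi ((x - mu l) / sig l)\<bar>)"
        by (rule sum_ennreal) (simp add: a0)
      ultimately show "ennreal \<bar>indicator {0..} x - F x\<bar> = (\<Sum>l=1..N. ennreal (a l) * ennreal \<bar>indicator {0..} x - Phi ((x - mu l) / sig l)\<bar>)"
        by simp
    qed
    also have "\<dots> = (\<Sum>l=1..N. ennreal (a l) * (\<integral>\<^sup>+x. ennreal \<bar>indicator {0..} x - Phi ((x - mu l) / sig l)\<bar> \<partial>lborel))"
      by (simp add: nn_integral_sum nn_integral_cmult)
    also have "\<dots> = (\<Sum>l=1..N. ennreal (a l) * ennreal (fold l))"
    proof (intro sum.cong refl arg_cong2[where f="(*)"])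
      fix l assume l: "l \<in> {1..N}"
      have "(\<integral>\<^sup>+x. ennreal \<bar>indicator {0..} x - Phi ((x - mu l) / sig l)\<bar> \<partial>lborel)
          = (\<integral>\<^sup>+x. ennreal \<bar>indicator {0..} x - cdf (distr N01 borel (\<lambda>z. mu l + sig l * z)) x\<bar> \<partial>lborel)"
        using cdf_affine[OF sg[OF l]] by simp
      also have "\<dots> = (\<integral>\<^sup>+z. ennreal \<bar>mu l + sig l * z\<bar> \<partial>N01)"
        by (rule W_eq0[OF N01_prob]) simp
      also have "\<dots> = ennreal (fold l)" unfolding fold_def by (rule fold_mean[OF sg[OF l]])
      finally show "(\<integral>\<^sup>+x. ennreal \<bar>indicator {0..} x - Phi ((x - mu l) / sig l)\<bar> \<partial>lborel) = ennreal (fold l)" .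
    qed
    also have "\<dots> = (\<Sum>l=1..N. ennreal (a l * fold l))"
      by (intro sum.cong) (auto simp: ennreal_mult a0 fold0)
    also have "\<dots> = ennreal (\<Sum>l=1..N. a l * fold l)"
      by (rule sum_ennreal) (simp add: a0 fold0)
    finally show ?thesis .
  qed
  have intY: "integrable M Y"
  proof (rule integrableI_bounded)
    show "Y \<in> borel_measurable M" by (rule Ym)
    have "(\<integral>\<^sup>+x. ennreal (norm (Y x)) \<partial>M) = (\<integral>\<^sup>+\<omega>. ennreal \<bar>Y \<omega>\<bar> \<partial>M)" by simp
    then show "(\<integral>\<^sup>+x. ennreal (norm (Y x)) \<partial>M) < \<infinity>" unfolding EY by simp
  qed
  have EYr: "expectation (\<lambda>\<omega>. \<bar>Y \<omega>\<bar>) = (\<Sum>l=1..N. a l * fold l)"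
  proof -
    have "ennreal (expectation (\<lambda>\<omega>. \<bar>Y \<omega>\<bar>)) = ennreal (\<Sum>l=1..N. a l * fold l)"
      using EY by (subst nn_integral_eq_integral[symmetric]) (auto intro: integrable_abs intY)
    moreover have "0 \<le> (\<Sum>l=1..N. a l * fold l)" using a0 fold0 by (intro sum_nonneg) auto
    ultimately show ?thesis by (simp add: integral_nonneg_AE)
  qed
  have partB: "expectation (\<lambda>\<omega>. \<bar>Y \<omega>\<bar>) \<le> (\<Sum>l=1..N. fold l)"
  proof -
    have "a l \<le> 1" if l: "l \<in> {1..N}" for l
      using member_le_sum[of l "{1..N}" a] a0 a1 l by simp
    then show ?thesis unfolding EYr using a0 fold0
      by (intro sum_mono) (simp add: mult_left_le_one_le)
  qed
  have Hx: "cdf (distr M borel (\<lambda>\<omega>. X \<omega> * Y \<omega>)) x = \<theta> * F x + (1 - \<theta>) * indicator {0..} x" for x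
    unfolding F_def by (rule H_eq[OF P Ym Xm assms(9) assms(10) assms(11)])
  have Gx: "G x = normal_cdf (\<theta> * \<mu>) s x" for x unfolding G_def s_def by (rule Ge)
  have th0: "0 \<le> 1 - \<theta>" using th by auto
  have "wass1 (cdf (distr M borel (\<lambda>\<omega>. X \<omega> * Y \<omega>))) G
     = (\<integral>\<^sup>+x. ennreal \<bar>(\<theta> * F x + (1 - \<theta>) * indicator {0..} x) - G x\<bar> \<partial>lborel)"
    unfolding wass1_def Hx ..
  also have "\<dots> \<le> (\<integral>\<^sup>+x. ennreal (1 - \<theta>) * ennreal \<bar>indicator {0..} x - F x\<bar>
       + (\<Sum>l=1..N. ennreal (a l) * ennreal \<bar>Phi ((x - mu l) / sig l) - G x\<bar>) \<partial>lborel)"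
  proof (intro nn_integral_mono)
    fix x :: real
    have e1: "F x - G x = (\<Sum>l=1..N. a l * (Phi ((x - mu l) / sig l) - G x))"
      unfolding F_def Fe using a1 by (simp add: algebra_simps sum_subtractf sum_distrib_left[symmetric])
    have "\<bar>F x - G x\<bar> \<le> (\<Sum>l=1..N. \<bar>a l * (Phi ((x - mu l) / sig l) - G x)\<bar>)"
      unfolding e1 by (rule sum_abs)
    also have "\<dots> = (\<Sum>l=1..N. a l * \<bar>Phi ((x - mu l) / sig l) - G x\<bar>)"
      by (intro sum.cong) (auto simp: abs_mult a0)
    finally have i2: "\<bar>F x - G x\<bar> \<le> (\<Sum>l=1..N. a l * \<bar>Phi ((x - mu l) / sig l) - G x\<bar>)" .
    have i1: "\<bar>(\<theta> * F x + (1 - \<theta>) * indicator {0..} x) - G x\<bar> \<le> (1 - \<theta>) * \<bar>indicator {0..} x - F x\<bar> + \<bar>F x - G x\<bar>"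
    proof -
      have "(\<theta> * F x + (1 - \<theta>) * indicator {0..} x) - G x = (1 - \<theta>) * (indicator {0..} x - F x) + (F x - G x)"
        by (simp add: algebra_simps)
      moreover have "\<bar>(1 - \<theta>) * (indicator {0..} x - F x) + (F x - G x)\<bar> \<le> \<bar>(1 - \<theta>) * (indicator {0..} x - F x)\<bar> + \<bar>F x - G x\<bar>"
        by (rule abs_triangle_ineq)
      moreover have "\<bar>(1 - \<theta>) * (indicator {0..} x - F x)\<bar> = (1 - \<theta>) * \<bar>indicator {0..} x - F x\<bar>"
        unfolding abs_mult using th0 by simp
      ultimately show ?thesis by simp
    qed
    have "(\<Sum>l=1..N. ennreal (a l) * ennreal \<bar>Phi ((x - mu l) / sig l) - G x\<bar>)
        = (\<Sum>l=1..N. ennreal (a l * \<bar>Phi ((x - mu l) / sig l) - G x\<bar>))"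
      by (intro sum.cong) (auto simp: ennreal_mult a0)
    also have "\<dots> = ennreal (\<Sum>l=1..N. a l * \<bar>Phi ((x - mu l) / sig l) - G x\<bar>)"
      by (rule sum_ennreal) (simp add: a0)
    finally have e3: "(\<Sum>l=1..N. ennreal (a l) * ennreal \<bar>Phi ((x - mu l) / sig l) - G x\<bar>)
        = ennreal (\<Sum>l=1..N. a l * \<bar>Phi ((x - mu l) / sig l) - G x\<bar>)" .
    have nn: "0 \<le> (\<Sum>l=1..N. a l * \<bar>Phi ((x - mu l) / sig l) - G x\<bar>)" using a0 by (intro sum_nonneg) auto
    have "\<bar>(\<theta> * F x + (1 - \<theta>) * indicator {0..} x) - G x\<bar>
        \<le> (1 - \<theta>) * \<bar>indicator {0..} x - F x\<bar> + (\<Sum>l=1..N. a l * \<bar>Phi ((x - mu l) / sig l) - G x\<bar>)"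
      using i1 i2 by linarith
    then show "ennreal \<bar>(\<theta> * F x + (1 - \<theta>) * indicator {0..} x) - G x\<bar>
        \<le> ennreal (1 - \<theta>) * ennreal \<bar>indicator {0..} x - F x\<bar>
       + (\<Sum>l=1..N. ennreal (a l) * ennreal \<bar>Phi ((x - mu l) / sig l) - G x\<bar>)"
      unfolding e3 using th0 nn
      by (simp add: ennreal_mult[symmetric] ennreal_plus[symmetric] del: ennreal_plus)
  qed
  also have "\<dots> = ennreal (1 - \<theta>) * (\<integral>\<^sup>+x. ennreal \<bar>indicator {0..} x - F x\<bar> \<partial>lborel)
       + (\<Sum>l=1..N. ennreal (a l) * (\<integral>\<^sup>+x. ennreal \<bar>Phi ((x - mu l) / sig l) - G x\<bar> \<partial>lborel))"
    by (simp add: nn_integral_add nn_integral_sum nn_integral_cmult)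
  also have "\<dots> \<le> ennreal (1 - \<theta>) * ennreal (expectation (\<lambda>\<omega>. \<bar>Y \<omega>\<bar>))
       + (\<Sum>l=1..N. ennreal (a l) * ennreal (\<bar>\<theta> * \<mu> - mu l\<bar> + \<bar>s - sig l\<bar>))"
  proof -
    have 1: "(\<integral>\<^sup>+x. ennreal \<bar>indicator {0..} x - F x\<bar> \<partial>lborel) = ennreal (expectation (\<lambda>\<omega>. \<bar>Y \<omega>\<bar>))"
      unfolding F_def W_eq0[OF P Ym] EY EYr ..
    have 2: "(\<integral>\<^sup>+x. ennreal \<bar>Phi ((x - mu l) / sig l) - G x\<bar> \<partial>lborel) \<le> ennreal (\<bar>\<theta> * \<mu> - mu l\<bar> + \<bar>s - sig l\<bar>)"
      if l: "l \<in> {1..N}" for l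
      unfolding Gx by (rule W_normals[OF sg[OF l] s0])
    show ?thesis unfolding 1
      by (rule add_left_mono, rule sum_mono, rule mult_left_mono, erule 2, simp)
  qed
  also have "\<dots> = ennreal ((1 - \<theta>) * expectation (\<lambda>\<omega>. \<bar>Y \<omega>\<bar>)
               + (\<Sum>l=1..N. a l * (\<bar>\<theta> * \<mu> - mu l\<bar> + \<bar>s - sig l\<bar>)))"
  proof -
    have E0: "0 \<le> expectation (\<lambda>\<omega>. \<bar>Y \<omega>\<bar>)" by (simp add: integral_nonneg_AE)
    have "(\<Sum>l=1..N. ennreal (a l) * ennreal (\<bar>\<theta> * \<mu> - mu l\<bar> + \<bar>s - sig l\<bar>))
        = (\<Sum>l=1..N. ennreal (a l * (\<bar>\<theta> * \<mu> - mu l\<bar> + \<bar>s - sig l\<bar>)))"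
      by (intro sum.cong) (auto simp: ennreal_mult a0)
    also have "\<dots> = ennreal (\<Sum>l=1..N. a l * (\<bar>\<theta> * \<mu> - mu l\<bar> + \<bar>s - sig l\<bar>))"
      by (rule sum_ennreal) (simp add: a0)
    finally have e: "(\<Sum>l=1..N. ennreal (a l) * ennreal (\<bar>\<theta> * \<mu> - mu l\<bar> + \<bar>s - sig l\<bar>))
        = ennreal (\<Sum>l=1..N. a l * (\<bar>\<theta> * \<mu> - mu l\<bar> + \<bar>s - sig l\<bar>))" .
    have nn: "0 \<le> (\<Sum>l=1..N. a l * (\<bar>\<theta> * \<mu> - mu l\<bar> + \<bar>s - sig l\<bar>))" using a0 by (intro sum_nonneg) auto
    show ?thesis unfolding e using th0 E0 nn
      by (simp add: ennreal_mult[symmetric] ennreal_plus[symmetric] del: ennreal_plus)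
  qed
  finally have partA: "wass1 (cdf (distr M borel (\<lambda>\<omega>. X \<omega> * Y \<omega>))) G \<le> ennreal ((1 - \<theta>) * expectation (\<lambda>\<omega>. \<bar>Y \<omega>\<bar>)
               + (\<Sum>l=1..N. a l * (\<bar>\<theta> * \<mu> - mu l\<bar> + \<bar>s - sig l\<bar>)))" .
  show ?thesis using partA partB unfolding G_def s_def fold_def by simp
qed


end
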